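(* Let $\mathbb{F}$ be a field. Every directed tensor-labeled hypergraph $\mathcal{H}=(Q_0,Q_1,\beta)$ with $\delta(\mathcal{H})\ge1$ satisfies $|Q_1|\ge2$ and $|V_{\mathrm{macro}}|\ge3$.
   Context: $T(\mathbb{F}^{Q_0})=\bigoplus_{k\ge0}(\mathbb{F}^{Q_0})^{\otimes k}$. A directed tensor-labeled hypergraph is $\mathcal{H}=(Q_0,Q_1,\beta)$ ($Q_0,Q_1$ finite) with $\beta:\mathbb{F}^{Q_1}\to T(\mathbb{F}^{Q_0})\times T(\mathbb{F}^{Q_0})$ linear, $\beta(\mathbf{1}_e)=(A_e,B_e)$. $V_{\mathrm{macro}}=\{A_e\}\cup\{B_e\}$ (a set); $B_{\mathrm{macro}}:\mathbb{F}^{Q_1}\to\mathbb{F}^{V_{\mathrm{macro}}}$, $\mathbf{1}_e\mapsto\mathbf{1}_{B_e}-\mathbf{1}_{A_e}$; $\hat\phi:\mathbb{F}^{V_{\mathrm{macro}}}\to T(\mathbb{F}^{Q_0})$, $\mathbf{1}_w\mapsto w$; $\delta(\mathcal{H})=\dim(\mathrm{Im}B_{\mathrm{macro}}\cap\mathrm{Ker}\hat\phi)$. *)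

theory Defs
  imports Complex_Main "HOL-Library.Function_Algebras"
begin

text \<open>The tensor algebra T(F^Q0) is modelled as the free associative algebra on Q0:
  an element is a finitely supported function from words (lists) over Q0 to F;
  words of length k span (F^Q0)^{tensor k}.\<close>

definition tensor_elem :: "'v set \<Rightarrow> ('v list \<Rightarrow> 'f::field) \<Rightarrow> bool" where
  "tensor_elem Q0 t \<longleftrightarrow> finite {w. t w \<noteq> 0} \<and> (\<forall>w. t w \<noteq> 0 \<longrightarrow> set w \<subseteq> Q0)"

definition fscale :: "'f::field \<Rightarrow> ('a \<Rightarrow> 'f) \<Rightarrow> ('a \<Rightarrow> 'f)" where
  "fscale c x = (\<lambda>a. c * x a)"

lemma vector_space_fscale: "vector_space (fscale :: 'f::field \<Rightarrow> ('a \<Rightarrow> 'f) \<Rightarrow> _)"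
  by (unfold_locales) (simp_all add: fscale_def algebra_simps fun_eq_iff)

text \<open>A directed tensor-labeled hypergraph (Q0,Q1,beta): beta is linear, hence
  determined by beta(1_e) = (A e, B e) for e in Q1.\<close>
definition tl_hypergraph :: "'v set \<Rightarrow> 'e set \<Rightarrow> ('e \<Rightarrow> 'v list \<Rightarrow> 'f::field) \<Rightarrow> ('e \<Rightarrow> 'v list \<Rightarrow> 'f) \<Rightarrow> bool" where
  "tl_hypergraph Q0 Q1 A B \<longleftrightarrow> finite Q0 \<and> finite Q1 \<and>
     (\<forall>e\<in>Q1. tensor_elem Q0 (A e) \<and> tensor_elem Q0 (B e))"

definition V_macro :: "'e set \<Rightarrow> ('e \<Rightarrow> 'v list \<Rightarrow> 'f) \<Rightarrow> ('e \<Rightarrow> 'v list \<Rightarrow> 'f) \<Rightarrow> ('v list \<Rightarrow> 'f) set" where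
  "V_macro Q1 A B = A ` Q1 \<union> B ` Q1"

text \<open>B_macro : F^Q1 -> F^V_macro, 1_e |-> 1_{B e} - 1_{A e}, extended linearly.
  Elements of F^Q1 are functions 'e => F (only values on Q1 matter).\<close>
definition B_macro :: "'e set \<Rightarrow> ('e \<Rightarrow> 'v list \<Rightarrow> 'f::field) \<Rightarrow> ('e \<Rightarrow> 'v list \<Rightarrow> 'f)
     \<Rightarrow> ('e \<Rightarrow> 'f) \<Rightarrow> (('v list \<Rightarrow> 'f) \<Rightarrow> 'f)" where
  "B_macro Q1 A B c = (\<lambda>u. \<Sum>e\<in>Q1. c e * ((if u = B e then 1 else 0) - (if u = A e then 1 else 0)))"

definition phi_hat :: "('v list \<Rightarrow> 'f::field) set \<Rightarrow> (('v list \<Rightarrow> 'f) \<Rightarrow> 'f) \<Rightarrow> ('v list \<Rightarrow> 'f)" where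
  "phi_hat V x = (\<lambda>u. \<Sum>w\<in>V. x w * w u)"

definition delta :: "'e set \<Rightarrow> ('e \<Rightarrow> 'v list \<Rightarrow> 'f::field) \<Rightarrow> ('e \<Rightarrow> 'v list \<Rightarrow> 'f) \<Rightarrow> nat" where
  "delta Q1 A B = vector_space.dim (fscale :: 'f \<Rightarrow> (('v list \<Rightarrow> 'f) \<Rightarrow> 'f) \<Rightarrow> _)
     ({x. \<exists>c. x = B_macro Q1 A B c} \<inter> {x. phi_hat (V_macro Q1 A B) x = 0})"

end

theory Submission
  imports Defs
begin

lemma dim_sub0:
  assumes "S \<subseteq> {0}"
  shows "vector_space.dim (fscale :: 'f::field \<Rightarrow> ('a \<Rightarrow> 'f) \<Rightarrow> _) S = 0"
proof -
  interpret vs: vector_space "fscale :: 'f::field \<Rightarrow> ('a \<Rightarrow> 'f) \<Rightarrow> _"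
    by (rule vector_space_fscale)
  have "vs.span S = vs.span {}"
  proof -
    have "vs.span S \<subseteq> vs.span {0}" using assms by (rule vs.span_mono)
    also have "\<dots> = vs.span {}" by simp
    finally show ?thesis using vs.span_mono[of "{}" S] by auto
  qed
  then have "vs.dim S = card ({} :: ('a \<Rightarrow> 'f) set)"
    by (intro vs.dim_eq_card) (auto simp: vs.independent_empty)
  then show ?thesis by simp
qed

theorem proposition4p9:
  fixes Q0 :: "'v set" and Q1 :: "'e set"
    and A B :: "'e \<Rightarrow> 'v list \<Rightarrow> 'f::field"
  assumes "tl_hypergraph Q0 Q1 A B"
    and "delta Q1 A B \<ge> 1"
  shows "card Q1 \<ge> 2 \<and> card (V_macro Q1 A B) \<ge> 3"
proof -
  define V where "V = V_macro Q1 A B"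
  have fQ1: "finite Q1" using assms(1) unfolding tl_hypergraph_def by auto
  have fV: "finite V" unfolding V_def V_macro_def using fQ1 by auto
  let ?S = "{x. \<exists>c. x = B_macro Q1 A B c} \<inter> {x. phi_hat (V_macro Q1 A B) x = 0}"
  have "\<not> ?S \<subseteq> {0}"
  proof
    assume "?S \<subseteq> {0}"
    then have "delta Q1 A B = 0" unfolding delta_def by (rule dim_sub0)
    with assms(2) show False by simp
  qed
  then obtain x c where x0: "x \<noteq> 0" and xc: "x = B_macro Q1 A B c"
    and ph: "phi_hat V x = 0" unfolding V_def by auto
  have out: "x u = 0" if "u \<notin> V" for u
  proof -
    have "\<forall>e\<in>Q1. u \<noteq> A e \<and> u \<noteq> B e" using that unfolding V_def V_macro_def by auto
    then show ?thesis unfolding xc B_macro_def by (auto intro: sum.neutral)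
  qed
  have AV: "A e \<in> V" and BV: "B e \<in> V" if "e \<in> Q1" for e
    using that unfolding V_def V_macro_def by auto
  have sumx: "sum x V = 0"
  proof -
    have "sum x V = (\<Sum>e\<in>Q1. \<Sum>u\<in>V. c e * ((if u = B e then 1 else 0) - (if u = A e then 1 else 0)))"
      unfolding xc B_macro_def by (rule sum.swap)
    also have "\<dots> = (\<Sum>e\<in>Q1. c e * ((\<Sum>u\<in>V. (if u = B e then 1 else 0)) - (\<Sum>u\<in>V. (if u = A e then 1 else 0))))"
      by (intro sum.cong refl) (simp only: sum_distrib_left right_diff_distrib sum_subtractf)
    also have "\<dots> = 0"
      by (intro sum.neutral ballI) (simp add: fV AV BV)
    finally show ?thesis .
  qed
  have phu: "(\<Sum>w\<in>V. x w * w u) = 0" for u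
    using fun_cong[OF ph, of u] unfolding phi_hat_def by simp
  have V3: "card V \<ge> 3"
  proof (rule ccontr)
    assume "\<not> card V \<ge> 3"
    then have "card V = 0 \<or> card V = 1 \<or> card V = 2" by auto
    moreover have "card V \<noteq> 0"
    proof
      assume "card V = 0"
      then have "V = {}" using fV by simp
      then have "x = 0" using out by auto
      with x0 show False by simp
    qed
    moreover have "card V \<noteq> 1"
    proof
      assume "card V = 1"
      then obtain a where Va: "V = {a}" by (auto simp: card_1_singleton_iff)
      then have "x a = 0" using sumx by simp
      then have "x u = 0" for u using out[of u] Va by (cases "u = a") auto
      then have "x = 0" by (intro ext) simp
      with x0 show False by simp
    qed
    moreover have "card V \<noteq> 2"
    proof
      assume "card V = 2"
      then obtain a b where Vab: "V = {a, b}" and ab: "a \<noteq> b" by (auto simp: card_2_iff)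
      then have s: "x a + x b = 0" using sumx by simp
      then have xb: "x b = - x a" by (simp add: eq_neg_iff_add_eq_0 add.commute)
      obtain u where u: "a u \<noteq> b u" using ab by (auto simp: fun_eq_iff)
      have "x a * a u + x b * b u = 0" using phu[of u] Vab ab by simp
      then have "x a * (a u - b u) = 0" using xb by (simp add: algebra_simps)
      then have "x a = 0" using u by simp
      then have "x b = 0" using xb by simp
      then have "x v = 0" for v using out[of v] Vab \<open>x a = 0\<close> by (cases "v = a"; cases "v = b") auto
      then have "x = 0" by (intro ext) simp
      with x0 show False by simp
    qed
    ultimately show False by blast
  qed
  have "card V \<le> card (A ` Q1) + card (B ` Q1)"
    unfolding V_def V_macro_def by (rule card_Un_le)
  also have "\<dots> \<le> card Q1 + card Q1" by (intro add_mono card_image_le fQ1)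
  finally have "card Q1 \<ge> 2" using V3 by simp
  with V3 show ?thesis unfolding V_def by simp
qed

end
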